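(* Suppose Assumptions 1 and 2 hold and run Algorithm 1 with any $\gamma,\alpha>0$. For every $t\in\{1,2,\ldots\}$, if $$\|\mathbf{Q}(t)\|>\gamma G+\frac{\alpha R^2+2DR+2\gamma^2G^2}{\gamma\epsilon},$$ then $\|\mathbf{Q}(t+1)\|<\|\mathbf{Q}(t)\|$.
   Context: Setting: $n,m$ positive integers; $\mathcal{X}_0\subset\mathbb{R}^n$ is a nonempty compact convex set; $\mathbf{g}=(g_1,\ldots,g_m)^{\mathsf T}:\mathbb{R}^n\to\mathbb{R}^m$ with each $g_k$ convex and continuous; $f^t$, $t=0,1,2,\ldots$, are convex differentiable real functions on (a neighborhood of) $\mathcal{X}_0$. All norms are Euclidean. Assumption 1: there are constants $D,\beta,G,R>0$ with $\|\nabla f^t(\mathbf{x})\|\le D$ for all $\mathbf{x}\in\mathcal{X}_0$ and all $t\ge0$; $\|\mathbf{g}(\mathbf{x})-\mathbf{g}(\mathbf{y})\|\le\beta\|\mathbf{x}-\mathbf{y}\|$ for all $\mathbf{x},\mathbf{y}\in\mathcal{X}_0$; $\|\mathbf{g}(\mathbf{x})\|\le G$ for all $\mathbf{x}\in\mathcal{X}_0$; $\|\mathbf{x}-\mathbf{y}\|\le R$ for all $\mathbf{x},\mathbf{y}\in\mathcal{X}_0$. Assumption 2 (Slater condition): there exist $\epsilon>0$ and $\hat{\mathbf{x}}\in\mathcal{X}_0$ with $g_k(\hat{\mathbf{x}})\le-\epsilon$ for all $k\in\{1,\ldots,m\}$. Algorithm 1 (parameters $\gamma>0,\alpha>0$):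 let $\tilde{\mathbf{g}}(\mathbf{x})=\gamma\mathbf{g}(\mathbf{x})$. Choose any $\mathbf{x}(0)\in\mathcal{X}_0$ and set $Q_k(0)=0$ for all $k$. For each $t=0,1,2,\ldots$: set $Q_k(t+1)=\max\{-\tilde g_k(\mathbf{x}(t)),\,Q_k(t)+\tilde g_k(\mathbf{x}(t))\}$ for $k=1,\ldots,m$, and let $\mathbf{x}(t+1)$ be a minimizer over $\mathbf{x}\in\mathcal{X}_0$ of $[\nabla f^t(\mathbf{x}(t))]^{\mathsf T}(\mathbf{x}-\mathbf{x}(t))+[\mathbf{Q}(t+1)+\tilde{\mathbf{g}}(\mathbf{x}(t))]^{\mathsf T}\tilde{\mathbf{g}}(\mathbf{x})+\alpha\|\mathbf{x}-\mathbf{x}(t)\|^2$, where $\mathbf{Q}(t)=(Q_1(t),\ldots,Q_m(t))^{\mathsf T}$. *)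

theory Defs
  imports "HOL-Analysis.Analysis"
begin

end

theory Submission
  imports Defs
begin

theorem lemma9:
  fixes X0 :: "(real ^ 'n) set"
    and g :: "real ^ 'n \<Rightarrow> real ^ 'm"
    and f :: "nat \<Rightarrow> real ^ 'n \<Rightarrow> real"
    and df :: "nat \<Rightarrow> real ^ 'n \<Rightarrow> real ^ 'n"
    and U :: "(real ^ 'n) set"
    and D \<beta> G R \<epsilon> \<gamma> \<alpha> :: real
    and xh :: "real ^ 'n"
    and x :: "nat \<Rightarrow> real ^ 'n"
    and Q :: "nat \<Rightarrow> real ^ 'm"
  assumes X0: "X0 \<noteq> {}" "compact X0" "convex X0"
    and g_convex: "\<And>k. convex_on UNIV (\<lambda>y. g y $ k)"
    and g_cont: "continuous_on UNIV g"
    and U: "open U" "convex U" "X0 \<subseteq> U"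
    and f_convex: "\<And>t. convex_on U (f t)"
    and f_grad: "\<And>t y. y \<in> U \<Longrightarrow> GDERIV (f t) y :> df t y"
    and pos: "D > 0" "\<beta> > 0" "G > 0" "R > 0"
    and A1_D: "\<And>t y. y \<in> X0 \<Longrightarrow> norm (df t y) \<le> D"
    and A1_beta: "\<And>y z. y \<in> X0 \<Longrightarrow> z \<in> X0 \<Longrightarrow> norm (g y - g z) \<le> \<beta> * norm (y - z)"
    and A1_G: "\<And>y. y \<in> X0 \<Longrightarrow> norm (g y) \<le> G"
    and A1_R: "\<And>y z. y \<in> X0 \<Longrightarrow> z \<in> X0 \<Longrightarrow> norm (y - z) \<le> R"
    and slater: "\<epsilon> > 0" "xh \<in> X0" "\<And>k. g xh $ k \<le> - \<epsilon>"
    and params: "\<gamma> > 0" "\<alpha> > 0"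
    and x0: "x 0 \<in> X0"
    and Q0: "Q 0 = 0"
    and Q_upd: "\<And>t k. Q (Suc t) $ k = max (- (\<gamma> * g (x t) $ k)) (Q t $ k + \<gamma> * g (x t) $ k)"
    and x_mem: "\<And>t. x (Suc t) \<in> X0"
    and x_min: "\<And>t y. y \<in> X0 \<Longrightarrow>
        df t (x t) \<bullet> (x (Suc t) - x t) + (Q (Suc t) + \<gamma> *\<^sub>R g (x t)) \<bullet> (\<gamma> *\<^sub>R g (x (Suc t)))
          + \<alpha> * (norm (x (Suc t) - x t))\<^sup>2
        \<le> df t (x t) \<bullet> (y - x t) + (Q (Suc t) + \<gamma> *\<^sub>R g (x t)) \<bullet> (\<gamma> *\<^sub>R g y)
          + \<alpha> * (norm (y - x t))\<^sup>2"
  shows "\<forall>t\<ge>1. norm (Q t) > \<gamma> * G + (\<alpha> * R\<^sup>2 + 2 * D * R + 2 * \<gamma>\<^sup>2 * G\<^sup>2) / (\<gamma> * \<epsilon>)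
           \<longrightarrow> norm (Q (Suc t)) < norm (Q t)"
proof (intro allI impI)
  fix t :: nat
  assume t1: "t \<ge> 1"
  assume cond: "norm (Q t) > \<gamma> * G + (\<alpha> * R\<^sup>2 + 2 * D * R + 2 * \<gamma>\<^sup>2 * G\<^sup>2) / (\<gamma> * \<epsilon>)"
  obtain s where ts: "t = Suc s" using t1 by (cases t) auto
  have xX: "x n \<in> X0" for n using x0 x_mem by (cases n) auto
  have Qnn: "Q n $ k \<ge> 0" for n k
  proof (induction n)
    case 0 then show ?case using Q0 by simp
  next
    case (Suc n) then show ?case unfolding Q_upd by (simp add: max_def)
  qed
  define a where "a = \<gamma> *\<^sub>R g (x t)"
  define b where "b = \<gamma> *\<^sub>R g (x s)"
  define w where "w = Q t + b"
  have wnn: "w $ k \<ge> 0" for k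
    unfolding w_def b_def ts by (simp add: Q_upd max_def)
  have na: "norm a \<le> \<gamma> * G" unfolding a_def using A1_G[OF xX] params
    by (simp add: mult_left_mono)
  have nb: "norm b \<le> \<gamma> * G" unfolding b_def using A1_G[OF xX] params
    by (simp add: mult_left_mono)
  have comp: "(Q (Suc t) $ k)\<^sup>2 \<le> (Q t $ k)\<^sup>2 + 2 * (Q t $ k * a $ k) + 2 * (a $ k)\<^sup>2" for k
  proof -
    have e: "Q (Suc t) $ k = max (- a $ k) (Q t $ k + a $ k)" unfolding Q_upd a_def by simp
    have "0 \<le> (Q t $ k + a $ k)\<^sup>2" by simp
    then show ?thesis unfolding e by (auto simp: max_def power2_eq_square algebra_simps)
  qed
  have drift: "(norm (Q (Suc t)))\<^sup>2 \<le> (norm (Q t))\<^sup>2 + 2 * (Q t \<bullet> a) + 2 * (norm a)\<^sup>2"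
  proof -
    have "(norm (Q (Suc t)))\<^sup>2 = (\<Sum>k\<in>UNIV. (Q (Suc t) $ k)\<^sup>2)"
      unfolding power2_norm_eq_inner inner_vec_def by (simp add: power2_eq_square)
    also have "\<dots> \<le> (\<Sum>k\<in>UNIV. (Q t $ k)\<^sup>2 + 2 * (Q t $ k * a $ k) + 2 * (a $ k)\<^sup>2)"
      by (rule sum_mono) (rule comp)
    also have "\<dots> = (norm (Q t))\<^sup>2 + 2 * (Q t \<bullet> a) + 2 * (norm a)\<^sup>2"
      unfolding power2_norm_eq_inner inner_vec_def
      by (simp add: sum.distrib sum_distrib_left power2_eq_square)
    finally show ?thesis .
  qed
  have mn: "df s (x s) \<bullet> (x t - x s) + w \<bullet> a + \<alpha> * (norm (x t - x s))\<^sup>2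
        \<le> df s (x s) \<bullet> (xh - x s) + w \<bullet> (\<gamma> *\<^sub>R g xh) + \<alpha> * (norm (xh - x s))\<^sup>2"
    using x_min[OF slater(2), of s] unfolding w_def b_def a_def ts by simp
  have d1: "df s (x s) \<bullet> (xh - x s) \<le> D * R"
  proof -
    have "df s (x s) \<bullet> (xh - x s) \<le> norm (df s (x s)) * norm (xh - x s)" by (rule norm_cauchy_schwarz)
    also have "\<dots> \<le> D * R" using A1_D[OF xX] A1_R[OF slater(2) xX] pos
      by (intro mult_mono) auto
    finally show ?thesis .
  qed
  have d2: "- (df s (x s) \<bullet> (x t - x s)) \<le> D * R"
  proof -
    have "- (df s (x s) \<bullet> (x t - x s)) \<le> \<bar>df s (x s) \<bullet> (x t - x s)\<bar>" by simp
    also have "\<dots> \<le> norm (df s (x s)) * norm (x t - x s)" by (rule Cauchy_Schwarz_ineq2)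
    also have "\<dots> \<le> D * R" using A1_D[OF xX] A1_R[OF xX xX] pos
      by (intro mult_mono) auto
    finally show ?thesis .
  qed
  have d3: "\<alpha> * (norm (xh - x s))\<^sup>2 \<le> \<alpha> * R\<^sup>2"
    using A1_R[OF slater(2) xX, of s] params by (intro mult_left_mono power_mono) auto
  have d4: "0 \<le> \<alpha> * (norm (x t - x s))\<^sup>2" using params by simp
  have wb: "w \<bullet> (\<gamma> *\<^sub>R g xh) \<le> - (\<gamma> * \<epsilon>) * norm w"
  proof -
    have "w \<bullet> (\<gamma> *\<^sub>R g xh) = (\<Sum>k\<in>UNIV. w $ k * (\<gamma> * g xh $ k))"
      unfolding inner_vec_def by simp
    also have "\<dots> \<le> (\<Sum>k\<in>UNIV. w $ k * (- (\<gamma> * \<epsilon>)))"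
    proof (rule sum_mono)
      fix k
      have "\<gamma> * g xh $ k \<le> - (\<gamma> * \<epsilon>)" using slater(3)[of k] params
        using mult_left_mono[of "g xh $ k" "- \<epsilon>" \<gamma>] by simp
      then show "w $ k * (\<gamma> * g xh $ k) \<le> w $ k * (- (\<gamma> * \<epsilon>))"
        using wnn[of k] by (rule mult_left_mono)
    qed
    also have "\<dots> = - (\<gamma> * \<epsilon>) * (\<Sum>k\<in>UNIV. \<bar>w $ k\<bar>)"
      using wnn by (simp add: sum_distrib_left sum_negf mult.commute mult.left_commute)
    also have "\<dots> \<le> - (\<gamma> * \<epsilon>) * norm w"
      using norm_le_l1_cart[of w] params slater(1)
      by (intro mult_left_mono_neg) auto
    finally show ?thesis .
  qed
  have nw: "norm w \<ge> norm (Q t) - \<gamma> * G"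
    using norm_triangle_ineq4[of w b] nb unfolding w_def by simp
  have ba: "- (b \<bullet> a) \<le> \<gamma> * G * (\<gamma> * G)"
  proof -
    have "- (b \<bullet> a) \<le> \<bar>b \<bullet> a\<bar>" by simp
    also have "\<dots> \<le> norm b * norm a" by (rule Cauchy_Schwarz_ineq2)
    also have "\<dots> \<le> \<gamma> * G * (\<gamma> * G)" using na nb params pos by (intro mult_mono) auto
    finally show ?thesis .
  qed
  have wa: "w \<bullet> a = Q t \<bullet> a + b \<bullet> a" unfolding w_def by (simp add: inner_add_left)
  have ge: "\<gamma> * \<epsilon> > 0" using params slater by simp
  have wb2: "w \<bullet> (\<gamma> *\<^sub>R g xh) \<le> - (\<gamma> * \<epsilon>) * norm (Q t) + \<gamma> * \<epsilon> * (\<gamma> * G)"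
  proof -
    have "- (\<gamma> * \<epsilon>) * norm w \<le> - (\<gamma> * \<epsilon>) * (norm (Q t) - \<gamma> * G)"
      using nw ge by (intro mult_left_mono_neg) auto
    then show ?thesis using wb by (simp add: algebra_simps)
  qed
  have Qa: "Q t \<bullet> a \<le> 2 * D * R + \<alpha> * R\<^sup>2 + \<gamma> * G * (\<gamma> * G)
      - (\<gamma> * \<epsilon>) * norm (Q t) + \<gamma> * \<epsilon> * (\<gamma> * G)"
    using mn d1 d2 d3 d4 wb2 ba wa by (simp add: algebra_simps)
  have na2: "(norm a)\<^sup>2 \<le> (\<gamma> * G)\<^sup>2" using na by (intro power_mono) auto
  have c2: "\<gamma> * \<epsilon> * norm (Q t) > \<gamma> * \<epsilon> * (\<gamma> * G) + (\<alpha> * R\<^sup>2 + 2 * D * R + 2 * \<gamma>\<^sup>2 * G\<^sup>2)"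
  proof -
    have "\<gamma> * \<epsilon> * norm (Q t) > \<gamma> * \<epsilon> * (\<gamma> * G + (\<alpha> * R\<^sup>2 + 2 * D * R + 2 * \<gamma>\<^sup>2 * G\<^sup>2) / (\<gamma> * \<epsilon>))"
      using cond ge by (intro mult_strict_left_mono) auto
    moreover have "\<gamma> * \<epsilon> * (\<gamma> * G + (\<alpha> * R\<^sup>2 + 2 * D * R + 2 * \<gamma>\<^sup>2 * G\<^sup>2) / (\<gamma> * \<epsilon>))
       = \<gamma> * \<epsilon> * (\<gamma> * G) + (\<alpha> * R\<^sup>2 + 2 * D * R + 2 * \<gamma>\<^sup>2 * G\<^sup>2)"
      using ge by (simp add: distrib_left del: times_divide_eq_right) (metis ge less_irrefl nonzero_mult_div_cancel_left times_divide_eq_right)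
    ultimately show ?thesis by linarith
  qed
  have "(norm (Q (Suc t)))\<^sup>2 < (norm (Q t))\<^sup>2"
    using drift Qa na2 c2 by (simp add: power2_eq_square algebra_simps)
  then show "norm (Q (Suc t)) < norm (Q t)"
    using power_less_imp_less_base by fastforce
qed

end
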